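(* Let $A$ and $B$ be persistence diagrams and let $c^*\ge 0$ be an optimal dilation for $(A,B)$. Then: (1) (Positivity) $\overline{d_D}(A,B)\ge 0$, and $\overline{d_D}(A,B)=0$ if and only if $B=c^*A$. (2) (Asymmetry) $\overline{d_D}(A,B)\ge c^*\cdot \overline{d_D}(B,A)$. (3) (Dilation invariance) For every $c>0$: $\overline{d_D}(cA,B)=\overline{d_D}(A,B)$ and $\overline{d_D}(A,cB)=c\cdot\overline{d_D}(A,B)$. (4) (Boundedness) $\overline{d_D}(A,B)\le \min\{d_\infty(A,B),\, d_\infty(D_0,B)\}$, where $D_0$ is the empty diagram.
   Context: A persistence diagram is a finite multiset of points $a=(a_x,a_y)\in\mathbb{R}^2$ with $0\le a_x<a_y<\infty$, together with the diagonal $\Delta=\{(x,x)\}$ taken with infinite multiplicity. The empty diagram $D_0$ consists only of $\Delta$. The bottleneck distance is $d_\infty(A,B)=\inf_\gamma\sup_{a}\|a-\gamma(a)\|_\infty$, the infimum over multi-bijections $\gamma$ between $A\cup\Delta$ and $B\cup\Delta$ (points may be matched to the diagonal; matching a point $a$ to $\Delta$ costs $(a_y-a_x)/2$). For $c>0$, the dilation is $cA=\{(ca_x,ca_y): a\in A\}$ (diagonal fixed), and by convention $0A=D_0$. The dilation-invariant bottleneck dissimilarity is $\overline{d_D}(A,B)=\inf_{c> 0} d_\infty(cA,B)$ (equivalently the infimum over $c\ge 0$). An optimal dilation is a number $c^*\ge 0$ with $d_\infty(c^*A,B)=\overline{d_D}(A,B)$; such a $c^*$ exists. *)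

theory Defs
  imports Complex_Main "HOL-Library.Multiset"
begin

text \<open>A persistence diagram is represented by its finite multiset of off-diagonal
points (birth, death) with 0 <= birth < death; the diagonal (with infinite
multiplicity) is implicit.\<close>

type_synonym pt = "real \<times> real"
type_synonym diagram = "pt multiset"

definition is_diagram :: "diagram \<Rightarrow> bool" where
  "is_diagram A \<longleftrightarrow> (\<forall>a \<in># A. 0 \<le> fst a \<and> fst a < snd a)"

definition D0 :: diagram where "D0 = {#}"

definition linf :: "pt \<Rightarrow> pt \<Rightarrow> real" where
  "linf a b = max \<bar>fst a - fst b\<bar> \<bar>snd a - snd b\<bar>"

text \<open>cost of matching a point to the diagonal\<close>
definition pers_half :: "pt \<Rightarrow> real" where
  "pers_half a = (snd a - fst a) / 2"

text \<open>A multi-bijection between A \<union> \<Delta> and B \<union> \<Delta> is given by the multiset M of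
pairs of off-diagonal points matched to each other; all remaining points of A and
of B are matched to the diagonal (and the diagonal to itself).\<close>
definition is_matching :: "diagram \<Rightarrow> diagram \<Rightarrow> (pt \<times> pt) multiset \<Rightarrow> bool" where
  "is_matching A B M \<longleftrightarrow> image_mset fst M \<subseteq># A \<and> image_mset snd M \<subseteq># B"

definition matching_cost :: "diagram \<Rightarrow> diagram \<Rightarrow> (pt \<times> pt) multiset \<Rightarrow> real" where
  "matching_cost A B M = Max ({0}
      \<union> (\<lambda>p. linf (fst p) (snd p)) ` set_mset M
      \<union> pers_half ` set_mset (A - image_mset fst M)
      \<union> pers_half ` set_mset (B - image_mset snd M))"

definition bottleneck :: "diagram \<Rightarrow> diagram \<Rightarrow> real" where
  "bottleneck A B = Inf (matching_cost A B ` {M. is_matching A B M})"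

text \<open>Dilation cA; by convention 0A (and, harmlessly, cA for c < 0) is D_0.\<close>
definition dil :: "real \<Rightarrow> diagram \<Rightarrow> diagram" where
  "dil c A = (if c > 0 then image_mset (\<lambda>a. (c * fst a, c * snd a)) A else D0)"

definition dbar :: "diagram \<Rightarrow> diagram \<Rightarrow> real" where
  "dbar A B = Inf ((\<lambda>c. bottleneck (dil c A) B) ` {c. c > 0})"

definition optimal_dilation :: "diagram \<Rightarrow> diagram \<Rightarrow> real \<Rightarrow> bool" where
  "optimal_dilation A B c \<longleftrightarrow> c \<ge> 0 \<and> bottleneck (dil c A) B = dbar A B"

end

theory Submission
  imports Defs
begin

lemma matchings_finite: "finite {M. is_matching A B M}"
proof -
  have "{M. is_matching A B M} \<subseteq> (\<Union>n\<in>{0..size A}. multisets_of_size (set_mset A \<times> set_mset B) n)"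
  proof
    fix M assume "M \<in> {M. is_matching A B M}"
    hence h1: "image_mset fst M \<subseteq># A" and h2: "image_mset snd M \<subseteq># B"
      by (auto simp: is_matching_def)
    have "size M \<le> size A" using size_mset_mono[OF h1] by simp
    moreover have "set_mset M \<subseteq> set_mset A \<times> set_mset B"
    proof
      fix p assume "p \<in># M"
      hence "fst p \<in># image_mset fst M" "snd p \<in># image_mset snd M" by auto
      hence "fst p \<in># A" "snd p \<in># B"
        using h1 h2 mset_subset_eqD by metis+
      thus "p \<in> set_mset A \<times> set_mset B" by (cases p) auto
    qed
    ultimately show "M \<in> (\<Union>n\<in>{0..size A}. multisets_of_size (set_mset A \<times> set_mset B) n)"
      by (auto simp: multisets_of_size_def)
  qed
  moreover have "finite (\<Union>n\<in>{0..size A}. multisets_of_size (set_mset A \<times> set_mset B) n)"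
    by auto
  ultimately show ?thesis by (rule finite_subset)
qed

lemma empty_matching: "is_matching A B {#}"
  by (simp add: is_matching_def)

lemma cost_nonneg: "matching_cost A B M \<ge> 0"
  unfolding matching_cost_def by (rule Max_ge) auto

lemma bottleneck_nonneg: "bottleneck A B \<ge> 0"
  unfolding bottleneck_def
  by (rule cInf_greatest) (use empty_matching cost_nonneg in auto)

lemma bottleneck_le: "is_matching A B M \<Longrightarrow> bottleneck A B \<le> matching_cost A B M"
  unfolding bottleneck_def
  by (rule cInf_lower) (auto intro: bdd_belowI[where m=0] cost_nonneg)

lemma bottleneck_attained: "\<exists>M. is_matching A B M \<and> bottleneck A B = matching_cost A B M"
proof -
  let ?S = "matching_cost A B ` {M. is_matching A B M}"
  have "finite ?S" using matchings_finite by simp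
  moreover have "?S \<noteq> {}" using empty_matching by auto
  ultimately have "Inf ?S \<in> ?S" using cInf_eq_Min Min_in by metis
  thus ?thesis unfolding bottleneck_def by auto
qed

definition sc :: "real \<Rightarrow> pt \<Rightarrow> pt" where "sc c a = (c * fst a, c * snd a)"

lemma dil_pos: "c > 0 \<Longrightarrow> dil c X = image_mset (sc c) X"
  by (simp add: dil_def sc_def[abs_def])

lemma linf_sc: "c > 0 \<Longrightarrow> linf (sc c a) (sc c b) = c * linf a b"
proof -
  assume c: "c > 0"
  have "\<bar>c * x - c * y\<bar> = c * \<bar>x - y\<bar>" for x y :: real
    using c by (simp add: right_diff_distrib[symmetric] abs_mult)
  thus ?thesis using c by (simp add: linf_def sc_def max_mult_distrib_left)
qed

lemma pers_sc: "pers_half (sc c a) = c * pers_half a"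
  by (simp add: pers_half_def sc_def algebra_simps)

lemma cost_scale:
  assumes c: "c > 0" and m: "is_matching X Y M"
  defines "M' \<equiv> image_mset (\<lambda>p. (sc c (fst p), sc c (snd p))) M"
  shows "is_matching (dil c X) (dil c Y) M' \<and>
         matching_cost (dil c X) (dil c Y) M' = c * matching_cost X Y M"
proof -
  have f: "image_mset fst M' = image_mset (sc c) (image_mset fst M)"
   and s: "image_mset snd M' = image_mset (sc c) (image_mset snd M)"
    by (simp_all add: M'_def multiset.map_comp comp_def)
  from m have h1: "image_mset fst M \<subseteq># X" and h2: "image_mset snd M \<subseteq># Y"
    by (auto simp: is_matching_def)
  have mm: "is_matching (dil c X) (dil c Y) M'"
    using h1 h2 c by (simp add: is_matching_def f s dil_pos image_mset_subseteq_mono)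
  have d1: "dil c X - image_mset fst M' = image_mset (sc c) (X - image_mset fst M)"
    using c h1 by (simp add: f dil_pos image_mset_Diff)
  have d2: "dil c Y - image_mset snd M' = image_mset (sc c) (Y - image_mset snd M)"
    using c h2 by (simp add: s dil_pos image_mset_Diff)
  have l: "(\<lambda>p. linf (fst p) (snd p)) ` set_mset M' = (*) c ` ((\<lambda>p. linf (fst p) (snd p)) ` set_mset M)"
    using c by (simp add: M'_def image_image linf_sc)
  let ?S = "{0} \<union> (\<lambda>p. linf (fst p) (snd p)) ` set_mset M
      \<union> pers_half ` set_mset (X - image_mset fst M)
      \<union> pers_half ` set_mset (Y - image_mset snd M)"
  have eq: "{0} \<union> (\<lambda>p. linf (fst p) (snd p)) ` set_mset M'
      \<union> pers_half ` set_mset (dil c X - image_mset fst M')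
      \<union> pers_half ` set_mset (dil c Y - image_mset snd M') = (*) c ` ?S"
    unfolding l d1 d2 by (simp add: image_Un image_image pers_sc)
  have mono: "mono ((*) c)" using c by (auto intro: monoI mult_left_mono)
  have "matching_cost (dil c X) (dil c Y) M' = Max ((*) c ` ?S)"
    unfolding matching_cost_def eq ..
  also have "\<dots> = c * Max ?S"
    by (rule mono_Max_commute[symmetric, OF mono]) auto
  finally show ?thesis using mm by (simp add: matching_cost_def)
qed

lemma bottleneck_scale_le:
  assumes c: "c > 0"
  shows "bottleneck (dil c X) (dil c Y) \<le> c * bottleneck X Y"
proof -
  have "bottleneck (dil c X) (dil c Y) / c \<le> bottleneck X Y"
    unfolding bottleneck_def[of X Y]
  proof (rule cInf_greatest)
    show "matching_cost X Y ` {M. is_matching X Y M} \<noteq> {}" using empty_matching by auto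
  next
    fix x assume "x \<in> matching_cost X Y ` {M. is_matching X Y M}"
    then obtain M where m: "is_matching X Y M" and x: "x = matching_cost X Y M" by auto
    from cost_scale[OF c m] bottleneck_le
    have "bottleneck (dil c X) (dil c Y) \<le> c * x" unfolding x by metis
    thus "bottleneck (dil c X) (dil c Y) / c \<le> x" using c by (simp add: field_simps)
  qed
  thus ?thesis using c by (simp add: field_simps)
qed

lemma dil_dil: "c > 0 \<Longrightarrow> d > 0 \<Longrightarrow> dil c (dil d X) = dil (c * d) X"
  by (simp add: dil_def multiset.map_comp comp_def mult.assoc)

lemma dil_one: "dil 1 X = X"
  by (simp add: dil_def)

lemma bottleneck_scale:
  assumes c: "c > 0"
  shows "bottleneck (dil c X) (dil c Y) = c * bottleneck X Y"
proof -
  have "bottleneck X Y = bottleneck (dil (1/c) (dil c X)) (dil (1/c) (dil c Y))"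
    using c by (simp add: dil_dil dil_one)
  also have "\<dots> \<le> (1/c) * bottleneck (dil c X) (dil c Y)"
    using c by (intro bottleneck_scale_le) simp
  finally have "c * bottleneck X Y \<le> bottleneck (dil c X) (dil c Y)"
    using c by (simp add: field_simps)
  thus ?thesis using bottleneck_scale_le[OF c, of X Y] by linarith
qed

lemma bottleneck_swap_le: "bottleneck Y X \<le> bottleneck X Y"
proof -
  obtain M where m: "is_matching X Y M" and e: "bottleneck X Y = matching_cost X Y M"
    using bottleneck_attained by blast
  let ?M = "image_mset prod.swap M"
  have m': "is_matching Y X ?M"
    using m by (simp add: is_matching_def multiset.map_comp comp_def)
  have "matching_cost Y X ?M = matching_cost X Y M"
    unfolding matching_cost_def
    by (simp add: multiset.map_comp comp_def image_image linf_def abs_minus_commute Un_ac)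
  thus ?thesis using bottleneck_le[OF m'] e by simp
qed

lemma bottleneck_sym: "bottleneck X Y = bottleneck Y X"
  using bottleneck_swap_le by (metis order.antisym)

lemma Inf_scale:
  fixes S :: "real set"
  assumes c: "c > 0" and ne: "S \<noteq> {}" and bd: "bdd_below S"
  shows "Inf ((*) c ` S) = c * Inf S"
proof (rule order.antisym)
  show "c * Inf S \<le> Inf ((*) c ` S)"
    using ne c by (auto intro!: cInf_greatest mult_left_mono cInf_lower bd)
next
  have bd': "bdd_below ((*) c ` S)"
  proof -
    obtain m where "\<forall>x\<in>S. m \<le> x" using bd by (auto simp: bdd_below_def)
    hence "\<forall>y\<in>(*) c ` S. c * m \<le> y" using c by auto
    thus ?thesis by (auto simp: bdd_below_def)
  qed
  have "Inf ((*) c ` S) / c \<le> Inf S"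
  proof (rule cInf_greatest[OF ne])
    fix x assume "x \<in> S"
    hence "Inf ((*) c ` S) \<le> c * x" using bd' by (auto intro: cInf_lower)
    thus "Inf ((*) c ` S) / c \<le> x" using c by (simp add: field_simps)
  qed
  thus "Inf ((*) c ` S) \<le> c * Inf S" using c by (simp add: field_simps)
qed

lemma dbar_nonneg: "dbar A B \<ge> 0"
  unfolding dbar_def
  by (rule cInf_greatest) (auto intro: bottleneck_nonneg exI[of _ 1])

lemma dbar_le: "c > 0 \<Longrightarrow> dbar A B \<le> bottleneck (dil c A) B"
  unfolding dbar_def
  by (rule cInf_lower) (auto intro: bdd_belowI[where m=0] bottleneck_nonneg)

lemma dbar_dil_left:
  assumes c: "c > 0" shows "dbar (dil c A) B = dbar A B"
proof -
  have "(\<lambda>d. bottleneck (dil d (dil c A)) B) ` {d. d > 0} = (\<lambda>e. bottleneck (dil e A) B) ` {e. e > 0}"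
  proof (intro equalityI subsetI)
    fix x assume "x \<in> (\<lambda>d. bottleneck (dil d (dil c A)) B) ` {d. d > 0}"
    then obtain d where "d > 0" "x = bottleneck (dil d (dil c A)) B" by auto
    thus "x \<in> (\<lambda>e. bottleneck (dil e A) B) ` {e. e > 0}"
      using c by (auto simp: dil_dil intro!: image_eqI[where x="d*c"])
  next
    fix x assume "x \<in> (\<lambda>e. bottleneck (dil e A) B) ` {e. e > 0}"
    then obtain e where e: "e > 0" "x = bottleneck (dil e A) B" by auto
    have "dil (e/c) (dil c A) = dil e A" using c e by (simp add: dil_dil)
    thus "x \<in> (\<lambda>d. bottleneck (dil d (dil c A)) B) ` {d. d > 0}"
      using c e by (auto intro!: image_eqI[where x="e/c"])
  qed
  thus ?thesis unfolding dbar_def by simp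
qed

lemma dbar_dil_right:
  assumes c: "c > 0" shows "dbar A (dil c B) = c * dbar A B"
proof -
  have "(\<lambda>d. bottleneck (dil d A) (dil c B)) ` {d. d > 0} = (*) c ` ((\<lambda>e. bottleneck (dil e A) B) ` {e. e > 0})"
  proof (intro equalityI subsetI)
    fix x assume "x \<in> (\<lambda>d. bottleneck (dil d A) (dil c B)) ` {d. d > 0}"
    then obtain d where d: "d > 0" "x = bottleneck (dil d A) (dil c B)" by auto
    have "dil d A = dil c (dil (d/c) A)" using c d by (simp add: dil_dil)
    hence "x = c * bottleneck (dil (d/c) A) B" using d c by (simp add: bottleneck_scale)
    thus "x \<in> (*) c ` ((\<lambda>e. bottleneck (dil e A) B) ` {e. e > 0})"
      using c d by auto
  next
    fix x assume "x \<in> (*) c ` ((\<lambda>e. bottleneck (dil e A) B) ` {e. e > 0})"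
    then obtain e where e: "e > 0" "x = c * bottleneck (dil e A) B" by auto
    have "dil (c*e) A = dil c (dil e A)" using c e by (simp add: dil_dil)
    hence "x = bottleneck (dil (c*e) A) (dil c B)" using e c by (simp add: bottleneck_scale)
    thus "x \<in> (\<lambda>d. bottleneck (dil d A) (dil c B)) ` {d. d > 0}"
      using c e by auto
  qed
  moreover have "Inf ((*) c ` ((\<lambda>e. bottleneck (dil e A) B) ` {e. e > 0})) = c * dbar A B"
    unfolding dbar_def
    by (rule Inf_scale[OF c]) (auto intro: bdd_belowI[where m=0] bottleneck_nonneg exI[of _ 1])
  ultimately show ?thesis unfolding dbar_def[of A "dil c B"] by simp
qed

lemma is_diagram_dil: "is_diagram A \<Longrightarrow> is_diagram (dil c A)"
  by (auto simp: is_diagram_def dil_def D0_def)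

lemma bottleneck_self: "bottleneck X X = 0"
proof -
  let ?M = "image_mset (\<lambda>a. (a, a)) X"
  have m: "is_matching X X ?M" by (simp add: is_matching_def multiset.map_comp comp_def)
  have "matching_cost X X ?M = 0"
    unfolding matching_cost_def by (simp add: multiset.map_comp comp_def linf_def image_image image_constant_conv)
  thus ?thesis using bottleneck_le[OF m] bottleneck_nonneg[of X X] by simp
qed

lemma bottleneck_zero:
  assumes dX: "is_diagram X" and dY: "is_diagram Y" and z: "bottleneck X Y = 0"
  shows "X = Y"
proof -
  obtain M where m: "is_matching X Y M" and e: "matching_cost X Y M = 0"
    using bottleneck_attained z by metis
  let ?S = "{0} \<union> (\<lambda>p. linf (fst p) (snd p)) ` set_mset M
      \<union> pers_half ` set_mset (X - image_mset fst M)
      \<union> pers_half ` set_mset (Y - image_mset snd M)"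
  have le: "x \<le> 0" if "x \<in> ?S" for x
  proof -
    have "x \<le> Max ?S" by (rule Max_ge) (use that in simp_all)
    thus ?thesis using e unfolding matching_cost_def by simp
  qed
  have pp: "pers_half a > 0" if "a \<in># X \<or> a \<in># Y" for a
    using that dX dY by (auto simp: is_diagram_def pers_half_def)
  have X0: "X - image_mset fst M = {#}"
  proof (rule ccontr)
    assume "X - image_mset fst M \<noteq> {#}"
    then obtain a where a: "a \<in># X - image_mset fst M" by fastforce
    hence "a \<in># X" by (meson in_diffD)
    hence "pers_half a > 0" using pp by blast
    moreover have "pers_half a \<le> 0" using le a by blast
    ultimately show False by simp
  qed
  have Y0: "Y - image_mset snd M = {#}"
  proof (rule ccontr)
    assume "Y - image_mset snd M \<noteq> {#}"
    then obtain a where a: "a \<in># Y - image_mset snd M" by fastforce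
    hence "a \<in># Y" by (meson in_diffD)
    hence "pers_half a > 0" using pp by blast
    moreover have "pers_half a \<le> 0" using le a by blast
    ultimately show False by simp
  qed
  from m have h1: "image_mset fst M \<subseteq># X" and h2: "image_mset snd M \<subseteq># Y"
    by (auto simp: is_matching_def)
  have "X = image_mset fst M" using X0 h1
    by (metis subset_mset.diff_add add.left_neutral)
  moreover have "Y = image_mset snd M" using Y0 h2
    by (metis subset_mset.diff_add add.left_neutral)
  moreover have "image_mset fst M = image_mset snd M"
  proof (rule image_mset_cong)
    fix p assume "p \<in># M"
    hence "linf (fst p) (snd p) \<le> 0" using le by blast
    thus "fst p = snd p" by (auto simp: linf_def prod_eq_iff)
  qed
  ultimately show ?thesis by simp
qed

lemma bottleneck_D0:
  "bottleneck D0 B = Max ({0} \<union> pers_half ` set_mset B)"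
proof -
  have "{M. is_matching D0 B M} = {{#}}"
    by (auto simp: is_matching_def D0_def)
  thus ?thesis by (simp add: bottleneck_def matching_cost_def D0_def)
qed

lemma dbar_le_D0: "dbar A B \<le> bottleneck D0 B"
proof -
  define P where "P = Max ({0} \<union> pers_half ` set_mset B)"
  define Q where "Q = Max ({0} \<union> pers_half ` set_mset A)"
  have P0: "P \<ge> 0" unfolding P_def by (rule Max_ge) auto
  have Q0: "Q \<ge> 0" unfolding Q_def by (rule Max_ge) auto
  have bnd: "dbar A B \<le> max P (c * Q)" if c: "c > 0" for c
  proof -
    have "dbar A B \<le> bottleneck (dil c A) B" by (rule dbar_le[OF c])
    also have "\<dots> \<le> matching_cost (dil c A) B {#}" by (rule bottleneck_le[OF empty_matching])
    also have "\<dots> \<le> max P (c * Q)"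
      unfolding matching_cost_def
    proof (rule Max.boundedI)
      fix x assume x: "x \<in> {0} \<union> (\<lambda>p. linf (fst p) (snd p)) ` set_mset {#}
          \<union> pers_half ` set_mset (dil c A - image_mset fst {#})
          \<union> pers_half ` set_mset (B - image_mset snd {#})"
      show "x \<le> max P (c * Q)"
      proof -
        { fix a assume a: "a \<in># A"
          have "pers_half a \<le> Q" unfolding Q_def by (rule Max_ge) (use a in auto)
          hence "pers_half (sc c a) \<le> c * Q" using c by (simp add: pers_sc)
        } note A1 = this
        { fix b assume b: "b \<in># B"
          have "pers_half b \<le> P" unfolding P_def by (rule Max_ge) (use b in auto) } note B1 = this
        have "x = 0 \<or> (\<exists>a\<in>#A. x = pers_half (sc c a)) \<or> (\<exists>b\<in>#B. x = pers_half b)"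
          using x c by (auto simp: dil_pos)
        thus ?thesis using P0 A1 B1 by (auto simp: le_max_iff_disj)
      qed
    qed auto
    finally show ?thesis .
  qed
  have "dbar A B \<le> P"
  proof (rule ccontr)
    assume "\<not> dbar A B \<le> P"
    hence lt: "dbar A B > P" by simp
    define c where "c = dbar A B / (2 * (Q + 1))"
    have c0: "c > 0" unfolding c_def using lt P0 Q0 by simp
    have "c * Q < dbar A B"
    proof -
      have "c * Q = dbar A B * (Q / (2 * (Q + 1)))" unfolding c_def using Q0 by simp
      also have "\<dots> < dbar A B * 1"
        using lt P0 Q0 by (intro mult_strict_left_mono) (auto simp: field_simps)
      finally show ?thesis by simp
    qed
    thus False using bnd[OF c0] lt by simp
  qed
  thus ?thesis by (simp add: bottleneck_D0 P_def)
qed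

theorem mainTheorem1:
  fixes A B :: diagram and cs :: real
  assumes "is_diagram A" and "is_diagram B"
    and "optimal_dilation A B cs"
  shows "(dbar A B \<ge> 0 \<and> (dbar A B = 0 \<longleftrightarrow> B = dil cs A))
       \<and> dbar A B \<ge> cs * dbar B A
       \<and> (\<forall>c>0. dbar (dil c A) B = dbar A B \<and> dbar A (dil c B) = c * dbar A B)
       \<and> dbar A B \<le> min (bottleneck A B) (bottleneck D0 B)"
proof -
  from assms(3) have cs0: "cs \<ge> 0" and opt: "bottleneck (dil cs A) B = dbar A B"
    by (auto simp: optimal_dilation_def)
  have p1: "dbar A B = 0 \<longleftrightarrow> B = dil cs A"
  proof
    assume "dbar A B = 0"
    hence "bottleneck (dil cs A) B = 0" using opt by simp
    thus "B = dil cs A" using bottleneck_zero is_diagram_dil assms(1,2) by metis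
  next
    assume "B = dil cs A"
    thus "dbar A B = 0" using opt bottleneck_self by metis
  qed
  have p2: "dbar A B \<ge> cs * dbar B A"
  proof (cases "cs = 0")
    case True thus ?thesis using dbar_nonneg by simp
  next
    case False
    hence c: "cs > 0" using cs0 by simp
    have "dil cs (dil (1/cs) B) = B" using c by (simp add: dil_dil dil_one)
    hence "dbar A B = bottleneck (dil cs A) (dil cs (dil (1/cs) B))" using opt by simp
    also have "\<dots> = cs * bottleneck (dil (1/cs) B) A"
      using c by (simp add: bottleneck_scale bottleneck_sym[of A])
    finally show ?thesis using c dbar_le[of "1/cs" B A] by simp
  qed
  have p4: "dbar A B \<le> bottleneck A B" using dbar_le[of 1 A B] by (simp add: dil_one)
  show ?thesis using p1 p2 p4 dbar_le_D0[of A B] dbar_nonneg[of A B]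
      dbar_dil_left dbar_dil_right by simp
qed

end
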